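(* Let $A$ be a finite alphabet, let $f$ be a bLSP morphism on $A$ and let $\mathbf{w}$ be an infinite word over $A$. If $f(\mathbf{w})$ is LSP, then $\mathbf{w}$ is LSP.
   Context: A finite word $u$ is a left special factor of a word $w$ if there are distinct letters $x\neq y$ with $xu$ and $yu$ factors of $w$. A word is LSP if every left special factor of it is a prefix of it. A bLSP morphism on $A$ is an endomorphism $f$ of $A^*$ such that there is a letter $\alpha$ with $f(\alpha)=\alpha$ and, for every letter $\beta\neq\alpha$, there is a letter $\gamma$ with $f(\beta)=f(\gamma)\beta$. *)

theory Defs
  imports Main
begin

definition factor :: "'a list \<Rightarrow> (nat \<Rightarrow> 'a) \<Rightarrow> bool" where
  "factor u w \<longleftrightarrow> (\<exists>i. u = map w [i..<i + length u])"

definition is_prefix :: "'a list \<Rightarrow> (nat \<Rightarrow> 'a) \<Rightarrow> bool" where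
  "is_prefix u w \<longleftrightarrow> u = map w [0..<length u]"

definition left_special :: "'a list \<Rightarrow> (nat \<Rightarrow> 'a) \<Rightarrow> bool" where
  "left_special u w \<longleftrightarrow> (\<exists>x y. x \<noteq> y \<and> factor (x # u) w \<and> factor (y # u) w)"

definition LSP :: "(nat \<Rightarrow> 'a) \<Rightarrow> bool" where
  "LSP w \<longleftrightarrow> (\<forall>u. left_special u w \<longrightarrow> is_prefix u w)"

definition bLSP :: "'a set \<Rightarrow> ('a \<Rightarrow> 'a list) \<Rightarrow> bool" where
  "bLSP A f \<longleftrightarrow> (\<forall>a\<in>A. set (f a) \<subseteq> A) \<and>
     (\<exists>\<alpha>\<in>A. f \<alpha> = [\<alpha>] \<and> (\<forall>\<beta>\<in>A. \<beta> \<noteq> \<alpha> \<longrightarrow> (\<exists>\<gamma>\<in>A. f \<beta> = f \<gamma> @ [\<beta>])))"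

text \<open>Image of an infinite word under a morphism: the n-th letter of
  f(w 0) f(w 1) f(w 2) ...  (well defined whenever all images are nonempty,
  which holds for bLSP morphisms).\<close>

definition morph_inf :: "('a \<Rightarrow> 'a list) \<Rightarrow> (nat \<Rightarrow> 'a) \<Rightarrow> nat \<Rightarrow> 'a" where
  "morph_inf f w n = concat (map (f \<circ> w) [0..<Suc n]) ! n"

end

theory Submission
  imports Defs
begin

lemma aux_split:
  "\<alpha> \<notin> set ta \<Longrightarrow> \<alpha> \<notin> set tb \<Longrightarrow> ta @ \<alpha> # s' = tb @ r \<Longrightarrow> (r = [] \<or> hd r = \<alpha>)
   \<Longrightarrow> ta = tb \<and> \<alpha> # s' = r"
proof (induction ta arbitrary: tb)
  case Nil
  then show ?case by (cases tb) auto
next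
  case (Cons c ta)
  then show ?case by (cases tb) auto
qed

lemma hd_concat_alpha:
  assumes P: "\<forall>c\<in>A. f c \<noteq> [] \<and> hd (f c) = \<alpha> \<and> \<alpha> \<notin> set (tl (f c)) \<and> last (f c) = c"
    and "set u \<subseteq> A"
  shows "concat (map f u) = [] \<or> hd (concat (map f u)) = \<alpha>"
  using assms by (cases u) auto

lemma decode:
  assumes P: "\<forall>c\<in>A. f c \<noteq> [] \<and> hd (f c) = \<alpha> \<and> \<alpha> \<notin> set (tl (f c)) \<and> last (f c) = c"
  shows "set u \<subseteq> A \<Longrightarrow> set ws \<subseteq> A \<Longrightarrow> concat (map f u) @ [\<alpha>] @ z = concat (map f ws)
    \<Longrightarrow> u = take (length u) ws"
proof (induction u arbitrary: ws z)
  case Nil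
  then show ?case by simp
next
  case (Cons a u)
  show ?case
  proof (cases ws)
    case Nil
    then show ?thesis using Cons.prems by simp
  next
    case (Cons b ws')
    have a: "a \<in> A" and b: "b \<in> A" using Cons.prems \<open>ws = b # ws'\<close> by auto
    obtain ta where ta: "f a = \<alpha> # ta" "\<alpha> \<notin> set ta"
      using P a by (metis list.collapse)
    obtain tb where tb: "f b = \<alpha> # tb" "\<alpha> \<notin> set tb"
      using P b by (metis list.collapse)
    define s where "s = concat (map f u) @ [\<alpha>] @ z"
    have hs: "hd s = \<alpha>" "s \<noteq> []"
      using hd_concat_alpha[OF P, of u] Cons.prems unfolding s_def by (auto simp: hd_append)
    then obtain s' where s': "s = \<alpha> # s'" by (metis list.collapse)
    define r where "r = concat (map f ws')"
    have hr: "r = [] \<or> hd r = \<alpha>"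
      using hd_concat_alpha[OF P, of ws'] Cons.prems \<open>ws = b # ws'\<close> unfolding r_def by auto
    have "\<alpha> # ta @ \<alpha> # s' = \<alpha> # tb @ r"
      using Cons.prems(3) \<open>ws = b # ws'\<close> ta tb s' unfolding s_def r_def by simp
    then have "ta = tb \<and> \<alpha> # s' = r" using aux_split[OF ta(2) tb(2) _ hr] by simp
    then have eq: "f a = f b" and rest: "concat (map f u) @ [\<alpha>] @ z = r"
      using ta tb s' s_def by auto
    have "a = b" using P a b eq by metis
    moreover have "u = take (length u) ws'"
      using Cons.IH[of ws' z] Cons.prems rest \<open>ws = b # ws'\<close> unfolding r_def by auto
    ultimately show ?thesis using \<open>ws = b # ws'\<close> by simp
  qed
qed

lemma bLSP_props:
  assumes "bLSP A f"
  obtains \<alpha> where "\<alpha> \<in> A"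
    "\<forall>c\<in>A. f c \<noteq> [] \<and> hd (f c) = \<alpha> \<and> \<alpha> \<notin> set (tl (f c)) \<and> last (f c) = c"
proof -
  obtain \<alpha> where al: "\<alpha> \<in> A" "f \<alpha> = [\<alpha>]"
    and st: "\<forall>\<beta>\<in>A. \<beta> \<noteq> \<alpha> \<longrightarrow> (\<exists>\<gamma>\<in>A. f \<beta> = f \<gamma> @ [\<beta>])"
    using assms unfolding bLSP_def by blast
  have "\<forall>c\<in>A. length (f c) = n \<longrightarrow> f c \<noteq> [] \<and> hd (f c) = \<alpha> \<and> \<alpha> \<notin> set (tl (f c)) \<and> last (f c) = c" for n
  proof (induction n rule: less_induct)
    case (less n)
    show ?case
    proof (intro ballI impI)
      fix c assume c: "c \<in> A" "length (f c) = n"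
      show "f c \<noteq> [] \<and> hd (f c) = \<alpha> \<and> \<alpha> \<notin> set (tl (f c)) \<and> last (f c) = c"
      proof (cases "c = \<alpha>")
        case True then show ?thesis using al by simp
      next
        case False
        then obtain \<gamma> where g: "\<gamma> \<in> A" "f c = f \<gamma> @ [c]" using st c by blast
        have "length (f \<gamma>) < n" using g c by simp
        then have "f \<gamma> \<noteq> [] \<and> hd (f \<gamma>) = \<alpha> \<and> \<alpha> \<notin> set (tl (f \<gamma>))"
          using less g by blast
        then show ?thesis using g False by (cases "f \<gamma>") auto
      qed
    qed
  qed
  then show ?thesis using that al by blast
qed

definition Fs :: "('a \<Rightarrow> 'a list) \<Rightarrow> (nat \<Rightarrow> 'a) \<Rightarrow> nat \<Rightarrow> nat \<Rightarrow> 'a list" where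
  "Fs f w a b = concat (map (f \<circ> w) [a..<b])"

lemma Fs_split: "a \<le> b \<Longrightarrow> b \<le> c \<Longrightarrow> Fs f w a c = Fs f w a b @ Fs f w b c"
  unfolding Fs_def
  by (metis concat_append map_append le_Suc_ex upt_add_eq_append)

lemma Fs_len: assumes "\<forall>i. f (w i) \<noteq> []" shows "b \<le> length (Fs f w 0 b)"
proof (induction b)
  case 0 then show ?case by simp
next
  case (Suc b)
  have "Fs f w 0 (Suc b) = Fs f w 0 b @ f (w b)" unfolding Fs_def by simp
  moreover have "length (f (w b)) \<ge> 1" using assms by (metis One_nat_def Suc_leI length_greater_0_conv)
  ultimately show ?case using Suc by simp
qed

lemma morph_Fs:
  assumes ne: "\<forall>i. f (w i) \<noteq> []" and n: "n < length (Fs f w 0 m)"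
  shows "morph_inf f w n = Fs f w 0 m ! n"
proof -
  have mi: "morph_inf f w n = Fs f w 0 (Suc n) ! n" unfolding morph_inf_def Fs_def by simp
  show ?thesis
  proof (cases "m \<le> Suc n")
    case True
    then have "Fs f w 0 (Suc n) = Fs f w 0 m @ Fs f w m (Suc n)" using Fs_split[of 0 m "Suc n"] True by simp
    then show ?thesis using mi n by (simp add: nth_append)
  next
    case False
    then have "Fs f w 0 m = Fs f w 0 (Suc n) @ Fs f w (Suc n) m" using Fs_split[of 0 "Suc n" m] False by simp
    moreover have "n < length (Fs f w 0 (Suc n))" using Fs_len[OF ne, of "Suc n"] by simp
    ultimately show ?thesis using mi by (simp add: nth_append)
  qed
qed

lemma map_morph_Fs:
  assumes ne: "\<forall>i. f (w i) \<noteq> []" and ab: "a \<le> b"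
  shows "map (morph_inf f w) [length (Fs f w 0 a)..<length (Fs f w 0 b)] = Fs f w a b"
proof -
  have sp: "Fs f w 0 b = Fs f w 0 a @ Fs f w a b" using Fs_split[of 0 a b] ab by simp
  show ?thesis
  proof (rule nth_equalityI)
    show "length (map (morph_inf f w) [length (Fs f w 0 a)..<length (Fs f w 0 b)]) = length (Fs f w a b)"
      using sp by simp
  next
    fix i assume "i < length (map (morph_inf f w) [length (Fs f w 0 a)..<length (Fs f w 0 b)])"
    then have i: "i < length (Fs f w a b)" using sp by simp
    have "map (morph_inf f w) [length (Fs f w 0 a)..<length (Fs f w 0 b)] ! i
        = morph_inf f w (length (Fs f w 0 a) + i)" using i sp by simp
    also have "\<dots> = Fs f w 0 b ! (length (Fs f w 0 a) + i)"
      using morph_Fs[OF ne, of "length (Fs f w 0 a) + i" b] i sp by simp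
    also have "\<dots> = Fs f w a b ! i" using sp by (simp add: nth_append)
    finally show "map (morph_inf f w) [length (Fs f w 0 a)..<length (Fs f w 0 b)] ! i = Fs f w a b ! i" .
  qed
qed

lemma factor_Fs:
  assumes ne: "\<forall>i. f (w i) \<noteq> []" and ab: "a \<le> b" and jk: "j + k \<le> length (Fs f w a b)"
  shows "factor (take k (drop j (Fs f w a b))) (morph_inf f w)"
proof -
  let ?p = "length (Fs f w 0 a)"
  have sp: "Fs f w 0 b = Fs f w 0 a @ Fs f w a b" using Fs_split[of 0 a b] ab by simp
  have "take k (drop j (Fs f w a b)) = map (morph_inf f w) (take k (drop j [?p..<length (Fs f w 0 b)]))"
    using map_morph_Fs[OF ne ab] by (metis drop_map take_map)
  also have "take k (drop j [?p..<length (Fs f w 0 b)]) = [?p + j..<?p + j + k]"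
    using jk sp by (simp add: take_upt)
  finally show ?thesis unfolding factor_def by (intro exI[of _ "?p + j"]) simp
qed

theorem lemma2:
  fixes A :: "'a set" and f :: "'a \<Rightarrow> 'a list" and w :: "nat \<Rightarrow> 'a"
  assumes "finite A"
    and "bLSP A f"
    and "\<forall>i. w i \<in> A"
    and "LSP (morph_inf f w)"
  shows "LSP w"
proof -
  obtain \<alpha> where alA: "\<alpha> \<in> A" and
    P: "\<forall>c\<in>A. f c \<noteq> [] \<and> hd (f c) = \<alpha> \<and> \<alpha> \<notin> set (tl (f c)) \<and> last (f c) = c"
    using bLSP_props[OF assms(2)] by blast
  have ne: "\<forall>i. f (w i) \<noteq> []" using P assms(3) by blast
  let ?W = "morph_inf f w"
  show ?thesis unfolding LSP_def
  proof (intro allI impI)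
    fix u assume "left_special u w"
    then obtain x y where xy: "x \<noteq> y" "factor (x # u) w" "factor (y # u) w"
      unfolding left_special_def by blast
    define n where "n = length u"
    define U where "U = concat (map f u)"
    have fac: "factor (c # U @ [\<alpha>]) ?W" if "factor (c # u) w" for c
    proof -
      from that obtain i where i: "c # u = map w [i..<i + Suc n]"
        unfolding factor_def n_def by auto
      have "[i..<i + Suc (Suc n)] = [i..<i + Suc n] @ [i + Suc n]" by simp
      then have mw: "map w [i..<i + Suc (Suc n)] = c # u @ [w (i + Suc n)]" using i by simp
      have "Fs f w i (i + Suc (Suc n)) = concat (map f (map w [i..<i + Suc (Suc n)]))"
        unfolding Fs_def by simp
      also have "\<dots> = f c @ U @ f (w (i + Suc n))" unfolding mw U_def by simp
      finally have FS: "Fs f w i (i + Suc (Suc n)) = f c @ U @ f (w (i + Suc n))" .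
      have cA: "c \<in> A" using i assms(3) by (metis list.set_intros(1) image_iff list.set_map)
      obtain fc' where fc: "f c = fc' @ [c]" using P cA by (metis append_butlast_last_id)
      obtain tz where tz: "f (w (i + Suc n)) = \<alpha> # tz" using P assms(3) by (metis list.collapse)
      have "take (length U + 2) (drop (length fc') (Fs f w i (i + Suc (Suc n)))) = c # U @ [\<alpha>]"
        using FS fc tz by simp
      moreover have "length fc' + (length U + 2) \<le> length (Fs f w i (i + Suc (Suc n)))"
        using FS fc tz by simp
      ultimately show ?thesis using factor_Fs[OF ne, of i "i + Suc (Suc n)" "length fc'" "length U + 2"]
        by simp
    qed
    have "left_special (U @ [\<alpha>]) ?W"
      unfolding left_special_def using fac xy by blast
    then have pre: "U @ [\<alpha>] = map ?W [0..<Suc (length U)]"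
      using assms(4) unfolding LSP_def is_prefix_def by (metis length_append_singleton)
    define m where "m = Suc (length U)"
    have mle: "m \<le> length (Fs f w 0 m)" using Fs_len[OF ne] .
    have "map ?W [0..<m] = take m (map ?W [0..<length (Fs f w 0 m)])"
      using mle by (simp add: take_map take_upt)
    also have "map ?W [0..<length (Fs f w 0 m)] = Fs f w 0 m"
      using map_morph_Fs[OF ne, of 0 m] unfolding Fs_def by simp
    finally have "U @ [\<alpha>] = take m (Fs f w 0 m)" using pre m_def by simp
    then have "\<exists>z. U @ [\<alpha>] @ z = concat (map f (map w [0..<m]))"
      unfolding Fs_def by (metis append.assoc append_take_drop_id map_map)
    then obtain z where z: "concat (map f u) @ [\<alpha>] @ z = concat (map f (map w [0..<m]))"
      unfolding U_def by blast
    have uA: "set u \<subseteq> A"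
    proof -
      obtain i where "x # u = map w [i..<i + length (x # u)]" using xy(2) unfolding factor_def by (elim exE) simp
      then have "set (x # u) \<subseteq> A" using assms(3) by (metis image_subsetI image_subset_iff list.set_map)
      then show ?thesis by simp
    qed
    have wsA: "set (map w [0..<m]) \<subseteq> A" using assms(3) by auto
    have "u = take (length u) (map w [0..<m])" using decode[OF P uA wsA z] .
    moreover then have "length u \<le> m" by (metis length_map length_take length_upt min.absorb_iff2 min_def diff_zero)
    ultimately show "is_prefix u w" unfolding is_prefix_def by (simp add: take_map take_upt)
  qed
qed

end
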